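(* Let $A=(a_{ij})$ be the adjacency matrix of a graph on $[n]$ ($a_{ii}=0$), $Z_1,\dots,Z_n\in\mathbb R^{d_n}$, and let the LG-GNN quantities be $\lambda_i^0=\frac1{\sqrt{n-1}}\sum_\ell a_{i\ell}Z_\ell$, $\lambda_i^k=\lambda_i^{k-1}+\frac1{n-1}\sum_\ell a_{i\ell}\lambda_\ell^{k-1}$ ($k=1,\dots,L$), $\hat q_{i,j}^{(2)}=\langle\lambda_i^0,\lambda_j^0\rangle$ and $\hat q_{i,j}^{(k)}=\langle\lambda_i^{k-2},\lambda_j^0\rangle-\sum_{r=0}^{k-3}\binom{k-2}r\hat q_{i,j}^{(r+2)}$ for $3\le k\le L+2$. Then for all $2\le k\le L+2$, $$\hat q_{i,j}^{(k)}=\Big\langle\frac1{\sqrt{n-1}}\sum_{\ell\le n}a_{j\ell}Z_\ell,\ \frac1{\sqrt{n-1}}\sum_{\ell\le n}\hat W_{n,i,\ell}^{(k-1)}Z_\ell\Big\rangle.$$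
   Context: Empirical moment: $\hat W_{n,i,j}^{(k)}=\frac1{(n-1)^{k-1}}\sum_{r_1,\dots,r_{k-1}\le n}a_{ir_1}a_{r_1r_2}\cdots a_{r_{k-1}j}$, so $\hat W^{(1)}_{n,i,j}=a_{ij}$. *)

theory Defs
  imports "HOL-Analysis.Analysis"
begin

definition is_adjacency :: "nat \<Rightarrow> (nat \<Rightarrow> nat \<Rightarrow> real) \<Rightarrow> bool" where
  "is_adjacency n a \<longleftrightarrow>
     (\<forall>i\<in>{1..n}. \<forall>j\<in>{1..n}. a i j \<in> {0, 1} \<and> a i j = a j i) \<and>
     (\<forall>i\<in>{1..n}. a i i = 0)"

primrec lam :: "nat \<Rightarrow> (nat \<Rightarrow> nat \<Rightarrow> real) \<Rightarrow> (nat \<Rightarrow> real ^ 'd) \<Rightarrow> nat \<Rightarrow> nat \<Rightarrow> real ^ 'd" where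
  "lam n a Z 0 i = (1 / sqrt (real n - 1)) *\<^sub>R (\<Sum>l\<in>{1..n}. a i l *\<^sub>R Z l)"
| "lam n a Z (Suc k) i = lam n a Z k i + (1 / (real n - 1)) *\<^sub>R (\<Sum>l\<in>{1..n}. a i l *\<^sub>R lam n a Z k l)"

text \<open>qhat^(k)_{i,j}; for k = 2 (and, by convention, k < 2) it is <lambda_i^0, lambda_j^0>.\<close>
function qhat :: "nat \<Rightarrow> (nat \<Rightarrow> nat \<Rightarrow> real) \<Rightarrow> (nat \<Rightarrow> real ^ 'd) \<Rightarrow> nat \<Rightarrow> nat \<Rightarrow> nat \<Rightarrow> real" where
  "qhat n a Z k i j =
     (if k \<le> 2 then inner (lam n a Z 0 i) (lam n a Z 0 j)
      else inner (lam n a Z (k - 2) i) (lam n a Z 0 j)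
           - (\<Sum>r<k - 2. real ((k - 2) choose r) * qhat n a Z (r + 2) i j))"
  by pat_completeness auto
termination
  by (relation "Wellfounded.measure (\<lambda>(n, a, Z, k, i, j). k)") auto

text \<open>Empirical moment hat W^(k)_{n,i,j}: sum over r_1..r_{k-1} in [n] of
  a_{i r_1} a_{r_1 r_2} ... a_{r_{k-1} j}, divided by (n-1)^(k-1).
  The path is p 0 = i, p t = r t (0<t<k), p k = j.\<close>
definition What :: "nat \<Rightarrow> (nat \<Rightarrow> nat \<Rightarrow> real) \<Rightarrow> nat \<Rightarrow> nat \<Rightarrow> nat \<Rightarrow> real" where
  "What n a k i j =
     (1 / (real n - 1) ^ (k - 1)) *
     (\<Sum>r\<in>({1..k - 1} \<rightarrow>\<^sub>E {1..n}).
        \<Prod>t<k. a (if t = 0 then i else r t) (if Suc t = k then j else r (Suc t)))"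

end

theory Submission imports Defs begin

definition U :: "nat \<Rightarrow> (nat \<Rightarrow> nat \<Rightarrow> real) \<Rightarrow> nat \<Rightarrow> nat \<Rightarrow> nat \<Rightarrow> real" where
  "U n a k i j = (\<Sum>r\<in>({1..k - 1} \<rightarrow>\<^sub>E {1..n}).
        \<Prod>t<k. a (if t = 0 then i else r t) (if Suc t = k then j else r (Suc t)))"

lemma What_U: "What n a k i j = (1 / (real n - 1) ^ (k - 1)) * U n a k i j"
  unfolding What_def U_def by simp

lemma U_one: "U n a 1 i j = a i j"
  unfolding U_def by simp

lemma U_Suc: "U n a (Suc (Suc m)) i j = (\<Sum>y\<in>{1..n}. a i y * U n a (Suc m) y j)"
proof -
  let ?S = "{1..n}"
  define ins where "ins = (\<lambda>(y::nat, r'::nat\<Rightarrow>nat) t. if t = 1 then y else if t \<in> {2..m+1} then r' (t - 1) else undefined)"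
  define f where "f = (\<lambda>r. \<Prod>t<Suc (Suc m). a (if t = 0 then i else r t) (if Suc t = Suc (Suc m) then j else r (Suc t)))"
  define g where "g = (\<lambda>y r'. a i y * (\<Prod>t<Suc m. a (if t = 0 then y else r' t) (if Suc t = Suc m then j else r' (Suc t))))"
  have "(\<Sum>y\<in>?S. a i y * U n a (Suc m) y j) = (\<Sum>y\<in>?S. \<Sum>r'\<in>({1..m} \<rightarrow>\<^sub>E ?S). g y r')"
    unfolding U_def g_def by (simp add: sum_distrib_left)
  also have "\<dots> = (\<Sum>p\<in>?S \<times> ({1..m} \<rightarrow>\<^sub>E ?S). g (fst p) (snd p))"
    by (simp add: sum.cartesian_product split_beta)
  also have "\<dots> = (\<Sum>r\<in>({1..Suc m} \<rightarrow>\<^sub>E ?S). f r)"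
  proof (rule sum.reindex_bij_witness[where i = "\<lambda>r. (r 1, \<lambda>t. if t \<in> {1..m} then r (t+1) else undefined)" and j = ins])
    fix p assume p: "p \<in> ?S \<times> ({1..m} \<rightarrow>\<^sub>E ?S)"
    obtain y r' where pe: "p = (y, r')" by force
    with p have y: "y \<in> ?S" and r': "r' \<in> {1..m} \<rightarrow>\<^sub>E ?S" by auto
    show "(ins p 1, \<lambda>t. if t \<in> {1..m} then ins p (t+1) else undefined) = p"
      using r' unfolding pe ins_def by (auto simp: fun_eq_iff PiE_def extensional_def)
    show "ins p \<in> {1..Suc m} \<rightarrow>\<^sub>E ?S"
      using r' y unfolding pe ins_def apply (auto simp: PiE_def extensional_def Pi_def)
      apply (subgoal_tac "x - Suc 0 \<in> {1..m}", force, force)+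
      done

    show "f (ins p) = g (fst p) (snd p)"
      unfolding pe f_def g_def ins_def
      apply (subst prod.lessThan_Suc_shift)
      apply (rule arg_cong2[where f="(*)"])
       apply simp
      apply (rule prod.cong, simp)
      apply auto
      done
  next
    fix r assume r: "r \<in> {1..Suc m} \<rightarrow>\<^sub>E ?S"
    show "ins (r 1, \<lambda>t. if t \<in> {1..m} then r (t+1) else undefined) = r"
      using r unfolding ins_def by (auto simp: fun_eq_iff PiE_def extensional_def)
    show "(r 1, \<lambda>t. if t \<in> {1..m} then r (t+1) else undefined) \<in> ?S \<times> ({1..m} \<rightarrow>\<^sub>E ?S)"
      using r by (auto simp: PiE_def Pi_def extensional_def)
  qed
  finally show ?thesis unfolding U_def f_def by simp
qed

lemma What_Suc: "What n a (Suc (Suc m)) i j = (1 / (real n - 1)) * (\<Sum>y\<in>{1..n}. a i y * What n a (Suc m) y j)"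
  unfolding What_U U_Suc by (simp add: sum_distrib_left sum_divide_distrib algebra_simps)

definition Q :: "nat \<Rightarrow> (nat \<Rightarrow> nat \<Rightarrow> real) \<Rightarrow> (nat \<Rightarrow> real ^ 'd) \<Rightarrow> nat \<Rightarrow> nat \<Rightarrow> real ^ 'd" where
  "Q n a Z m i = (1 / sqrt (real n - 1)) *\<^sub>R (\<Sum>l\<in>{1..n}. What n a (Suc m) i l *\<^sub>R Z l)"

lemma Q_0: "Q n a Z 0 i = lam n a Z 0 i"
  unfolding Q_def using U_one[of n a] by (simp add: What_U)

lemma Q_Suc: "Q n a Z (Suc m) i = (1 / (real n - 1)) *\<^sub>R (\<Sum>y\<in>{1..n}. a i y *\<^sub>R Q n a Z m y)"
proof -
  have "(\<Sum>l\<in>{1..n}. What n a (Suc (Suc m)) i l *\<^sub>R Z l)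
      = (\<Sum>l\<in>{1..n}. (1 / (real n - 1)) *\<^sub>R (\<Sum>y\<in>{1..n}. (a i y * What n a (Suc m) y l) *\<^sub>R Z l))"
    unfolding What_Suc by (simp add: scaleR_sum_left scaleR_sum_right sum_divide_distrib)
  also have "\<dots> = (1 / (real n - 1)) *\<^sub>R (\<Sum>y\<in>{1..n}. a i y *\<^sub>R (\<Sum>l\<in>{1..n}. What n a (Suc m) y l *\<^sub>R Z l))"
    apply (simp add: scaleR_sum_right)
    by (rule sum.swap)
  finally show ?thesis unfolding Q_def by (simp add: scaleR_sum_right mult_ac)
qed

lemma binom_split:
  fixes F :: "nat \<Rightarrow> 'a::real_vector"
  shows "(\<Sum>r\<le>Suc k. real (Suc k choose r) *\<^sub>R F r)
       = (\<Sum>r\<le>k. real (k choose r) *\<^sub>R F r) + (\<Sum>r\<le>k. real (k choose r) *\<^sub>R F (Suc r))"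
proof -
  have A: "(\<Sum>r\<le>Suc k. real (Suc k choose r) *\<^sub>R F r)
      = F 0 + (\<Sum>r\<le>k. real (k choose r) *\<^sub>R F (Suc r)) + (\<Sum>r\<le>k. real (k choose Suc r) *\<^sub>R F (Suc r))"
    by (simp only: sum.atMost_Suc_shift[of _ "k"] binomial_Suc_Suc of_nat_add scaleR_add_left sum.distrib binomial_n_0 of_nat_1 scaleR_one add.assoc)
  have B: "(\<Sum>r\<le>k. real (k choose r) *\<^sub>R F r) = F 0 + (\<Sum>r<k. real (k choose Suc r) *\<^sub>R F (Suc r))"
    by (simp only: sum.atMost_shift[of _ k] binomial_n_0 of_nat_1 scaleR_one)
  have C: "(\<Sum>r\<le>k. real (k choose Suc r) *\<^sub>R F (Suc r)) = (\<Sum>r<k. real (k choose Suc r) *\<^sub>R F (Suc r))"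
    by (simp add: lessThan_Suc_atMost[symmetric])
  show ?thesis using A B C by (simp add: algebra_simps)
qed

lemma lam_Q: "lam n a Z k i = (\<Sum>r\<le>k. real (k choose r) *\<^sub>R Q n a Z r i)"
proof (induction k arbitrary: i)
  case 0
  then show ?case by (simp add: Q_0)
next
  case (Suc k)
  have "(1 / (real n - 1)) *\<^sub>R (\<Sum>l\<in>{1..n}. a i l *\<^sub>R lam n a Z k l)
      = (\<Sum>r\<le>k. real (k choose r) *\<^sub>R Q n a Z (Suc r) i)"
    unfolding Suc.IH Q_Suc
    apply (simp add: scaleR_sum_right algebra_simps)
    by (rule sum.swap)
  then show ?case unfolding lam.simps(2) binom_split Suc.IH by simp
qed

lemma qhat_Q: "qhat n a Z (m + 2) i j = inner (Q n a Z m i) (lam n a Z 0 j)"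
proof (induction m rule: less_induct)
  case (less m)
  show ?case
  proof (cases m)
    case 0
    then show ?thesis by (simp add: Q_0)
  next
    case (Suc m')
    have "qhat n a Z (m + 2) i j = inner (lam n a Z m i) (lam n a Z 0 j)
           - (\<Sum>r<m. real (m choose r) * qhat n a Z (r + 2) i j)"
      using Suc by simp
    also have "(\<Sum>r<m. real (m choose r) * qhat n a Z (r + 2) i j)
             = (\<Sum>r<m. real (m choose r) * inner (Q n a Z r i) (lam n a Z 0 j))"
      using less by simp
    also have "inner (lam n a Z m i) (lam n a Z 0 j)
             = (\<Sum>r\<le>m. real (m choose r) * inner (Q n a Z r i) (lam n a Z 0 j))"
      unfolding lam_Q[of n a Z m i] by (simp only: inner_sum_left inner_scaleR_left)
    finally have "qhat n a Z (m + 2) i j = (\<Sum>r\<le>m. real (m choose r) * inner (Q n a Z r i) (lam n a Z 0 j))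
       - (\<Sum>r<m. real (m choose r) * inner (Q n a Z r i) (lam n a Z 0 j))" .
    then show ?thesis by (simp only: lessThan_Suc_atMost[symmetric] sum.lessThan_Suc binomial_n_n)
  qed
qed

theorem lemmaD5:
  fixes n L :: nat and a :: "nat \<Rightarrow> nat \<Rightarrow> real" and Z :: "nat \<Rightarrow> real ^ 'd"
    and i j k :: nat
  assumes "n \<ge> 2" and "is_adjacency n a"
    and "i \<in> {1..n}" and "j \<in> {1..n}"
    and "2 \<le> k" and "k \<le> L + 2"
  shows "qhat n a Z k i j =
     inner ((1 / sqrt (real n - 1)) *\<^sub>R (\<Sum>l\<in>{1..n}. a j l *\<^sub>R Z l))
           ((1 / sqrt (real n - 1)) *\<^sub>R (\<Sum>l\<in>{1..n}. What n a (k - 1) i l *\<^sub>R Z l))"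
proof -
  obtain m where km: "k = m + 2" using assms(5) by (metis add.commute le_Suc_ex)
  have "qhat n a Z k i j = inner (Q n a Z m i) (lam n a Z 0 j)"
    unfolding km by (rule qhat_Q)
  also have "\<dots> = inner (lam n a Z 0 j) (Q n a Z m i)" by (rule inner_commute)
  finally show ?thesis unfolding Q_def km lam.simps(1) by simp
qed

end
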